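(* Fix integers $k\geq 2$, $a\in\mathbb{Z}$, $0\le s\le r$ with $r\ge 1$, and positive integers $A_1,\dots,A_r$. Let $P(y)=(y-a)^e\prod_{j=1}^t P_j(y)^{e_j}\in\mathbb{Z}[y]$ with $e\geq 1$, $e_j\ge 1$, where $P_1,\dots,P_t\in\mathbb{Z}[y]$ are distinct irreducible polynomials. Then the equation $$P(y)=\prod_{i=1}^s A_i^{n_i}n_i!\cdot\prod_{i=s+1}^r A_i^{n_i}n_i!!$$ has only finitely many solutions $(n_1,\dots,n_r,y)$ with $n_1,\dots,n_r$ positive integers and $y=x+a$ for some $x\in\mathcal{F}_k$.
   Context: For a positive integer $x=\prod_{i\in I}p_i^{\alpha_i}$ (prime factorization), $K(x)=\max_{i\in I}\alpha_i$ (with $K(1)=0$) and $\omega(x)=|I|$ is the number of distinct prime factors. $\mathcal{F}_k=\{x\in\mathbb{N}: K(x)<k\}$ (positive integers all of whose prime exponents are $<k$). $n!!$ is the double factorial. *)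

theory Defs
  imports "HOL-Computational_Algebra.Computational_Algebra"
begin

definition K :: "nat \<Rightarrow> nat" where
  "K x = (if prime_factors x = {} then 0 else Max ((\<lambda>p. multiplicity p x) ` prime_factors x))"

definition F :: "nat \<Rightarrow> nat set" where
  "F k = {x. x > 0 \<and> K x < k}"

fun dfact :: "nat \<Rightarrow> nat" where
  "dfact 0 = 1"
| "dfact (Suc 0) = 1"
| "dfact (Suc (Suc n)) = Suc (Suc n) * dfact n"

end

theory Submission
  imports Defs
begin

lemma dfact_pos: "dfact n > 0"
  by (induction n rule: dfact.induct) auto

lemma dfact_dvd_fact: "dfact n dvd fact n"
proof (induction n rule: dfact.induct)
  case (3 n)
  have "fact (Suc (Suc n)) = Suc (Suc n) * (Suc n * fact n)" by simp
  have "dfact (Suc (Suc n)) = Suc (Suc n) * dfact n" by simp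
  moreover have "Suc (Suc n) * dfact n dvd Suc (Suc n) * (Suc n * fact n)"
    using 3 by (intro mult_dvd_mono) auto
  ultimately show ?case by (metis \<open>fact (Suc (Suc n)) = _\<close>)
qed auto

lemma dfact_le_fact: "dfact n \<le> fact n"
  using dfact_dvd_fact by (simp add: dvd_imp_le)

lemma prime_dvd_dfact: "prime p \<Longrightarrow> p dvd dfact n \<Longrightarrow> p \<le> n"
  using dfact_dvd_fact dvd_trans prime_dvd_fact_iff by blast

lemma dfact_growth:
  fixes E :: nat assumes "E \<ge> 1"
  shows "E ^ n \<le> E ^ (E*E+2) * dfact n"
proof (induction n rule: less_induct)
  case (less n)
  show ?case
  proof (cases "n < E*E+2")
    case True
    have "E ^ n \<le> E ^ (E*E+2)" using True assms by (intro power_increasing) auto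
    also have "\<dots> \<le> E ^ (E*E+2) * dfact n" using dfact_pos[of n] by (metis One_nat_def Suc_leI mult_le_mono2 mult_1_right)
    finally show ?thesis .
  next
    case False
    define m where "m = n - 2"
    have m: "n = Suc (Suc m)" "m \<ge> E*E" using False unfolding m_def by auto
    have ih: "E ^ m \<le> E ^ (E*E+2) * dfact m" using less m by simp
    have "E ^ n = (E*E) * E ^ m" using m by simp
    also have "\<dots> \<le> n * (E ^ (E*E+2) * dfact m)"
    proof (rule mult_le_mono)
      show "E * E \<le> n" using m by linarith
    qed (rule ih)
    also have "\<dots> = E ^ (E*E+2) * dfact n" using m by (simp only: dfact.simps mult.left_commute)
    finally show ?thesis .
  qed
qed

definition prim :: "nat \<Rightarrow> nat" where
  "prim n = \<Prod>{p. prime p \<and> p \<le> n}"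

lemma fact_prod_nat: "fact n = (\<Prod>{1..n} :: nat)" using fact_prod[where 'a=nat] by simp

lemma choose_odd_le: "(2*m+1) choose m \<le> 4 ^ m"
proof -
  have "((2*m+1) choose m) + ((2*m+1) choose (m+1)) = (\<Sum>k\<in>{m, m+1}. (2*m+1) choose k)"
    by simp
  also have "\<dots> \<le> (\<Sum>k\<le>2*m+1. (2*m+1) choose k)"
    by (intro sum_mono2) auto
  also have "\<dots> = 2 ^ (2*m+1)" by (rule choose_row_sum)
  finally have "2 * ((2*m+1) choose m) \<le> 2 * 4 ^ m"
    using binomial_symmetric[of m "2*m+1"] by (simp add: power_mult)
  then show ?thesis by simp
qed

lemma mid_primes_le:
  "\<Prod>{p. prime p \<and> m+1 < p \<and> p \<le> 2*m+1} \<le> 4 ^ m"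
proof -
  define S where "S = {p. prime p \<and> m+1 < p \<and> p \<le> 2*m+1}"
  have fin: "finite S" unfolding S_def by auto
  have "\<Prod>S dvd \<Prod>{1..2*m+1}"
    by (rule prod_dvd_prod_subset) (auto simp: S_def prime_gt_0_nat Suc_leI)
  hence d1: "\<Prod>S dvd fact (2*m+1)" by (simp only: fact_prod_nat)
  have cop: "coprime (\<Prod>S) (fact m * fact (m+1))"
  proof (rule prod_coprime_left)
    fix p assume "p \<in> S"
    hence "prime p" "m+1 < p" unfolding S_def by auto
    hence nd: "\<not> p dvd fact m * fact (m+1)"
      by (auto simp only: prime_dvd_mult_iff prime_dvd_fact_iff)
    thus "coprime p (fact m * fact (m+1))" using prime_imp_coprime[OF \<open>prime p\<close> nd] by simp
  qed
  have mm: "2*m+1-m = m+1" by simp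
  have eq: "fact m * fact (m+1) * ((2*m+1) choose m) = (fact (2*m+1) :: nat)"
    using binomial_fact_lemma[of m "2*m+1"] unfolding mm by simp
  have "\<Prod>S dvd fact m * fact (m+1) * ((2*m+1) choose m)" using d1 by (simp only: eq)
  hence "\<Prod>S dvd ((2*m+1) choose m)" using cop
    by (metis coprime_dvd_mult_right_iff mult.commute)
  hence "\<Prod>S \<le> (2*m+1) choose m" by (rule dvd_imp_le) (simp add: zero_less_binomial)
  hence "\<Prod>S \<le> 4 ^ m" using choose_odd_le[of m] by (rule order_trans)
  thus ?thesis unfolding S_def .
qed

lemma prim_small: "n \<le> 2 \<Longrightarrow> prim n \<le> 4 ^ n"
proof -
  assume n: "n \<le> 2"
  have sub: "{p. prime p \<and> p \<le> n} \<subseteq> {2::nat}"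
  proof
    fix p assume "p \<in> {p. prime p \<and> p \<le> n}"
    hence "prime p" "p \<le> 2" using n by auto
    hence "p = 2" using prime_ge_2_nat[of p] by linarith
    thus "p \<in> {2}" by simp
  qed
  have "prim n \<le> \<Prod>{2::nat}" unfolding prim_def
    by (rule dvd_imp_le[OF prod_dvd_prod_subset[OF _ sub]]) auto
  also have "\<dots> = 2" by simp
  finally have "prim n \<le> 2" .
  show ?thesis
  proof (cases "n = 0")
    case True
    have e: "{p. prime p \<and> p \<le> n} = {}" using True by (auto dest: prime_gt_0_nat)
    show ?thesis unfolding prim_def e by simp
  next
    case False
    hence "4 ^ 1 \<le> (4::nat) ^ n" by (intro power_increasing) auto
    thus ?thesis using \<open>prim n \<le> 2\<close> by simp
  qed
qed

lemma prim_le: "prim n \<le> 4 ^ n"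
proof (induction n rule: less_induct)
  case (less n)
  show ?case
  proof (cases "n \<le> 2")
    case True
    then show ?thesis by (rule prim_small)
  next
    case False
    show ?thesis
    proof (cases "even n")
      case True
      have np: "\<not> prime n" using True False prime_odd_nat[of n] by auto
      have "{p. prime p \<and> p \<le> n} = {p. prime p \<and> p \<le> n - 1}"
      proof (intro Collect_cong iffI)
        fix p assume "prime p \<and> p \<le> n"
        moreover have "p \<noteq> n" using np calculation by auto
        ultimately show "prime p \<and> p \<le> n - 1" by auto
      qed auto
      hence "prim n = prim (n-1)" by (simp add: prim_def)
      also have "\<dots> \<le> 4 ^ (n-1)" using less False by simp
      also have "\<dots> \<le> 4 ^ n" by (intro power_increasing) auto
      finally show ?thesis .
    next
      case odd: False
      then obtain m where m: "n = 2*m+1" by (metis oddE)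
      have mpos: "m \<ge> 1" using False m by simp
      have split: "{p. prime p \<and> p \<le> n} = {p. prime p \<and> p \<le> m+1} \<union> {p. prime p \<and> m+1 < p \<and> p \<le> 2*m+1}"
        using m by auto
      have "prim n = prim (m+1) * \<Prod>{p. prime p \<and> m+1 < p \<and> p \<le> 2*m+1}"
        unfolding prim_def split by (rule prod.union_disjoint) auto
      also have "\<dots> \<le> 4 ^ (m+1) * 4 ^ m"
        using less[of "m+1"] mpos m mid_primes_le[of m] by (intro mult_le_mono) auto
      also have "\<dots> = 4 ^ n" using m by (simp add: power_add[symmetric])
      finally show ?thesis .
    qed
  qed
qed

lemma poly_abs_bound:
  fixes Q :: "int poly" and x :: int assumes x: "x \<ge> 1"
  shows "\<bar>poly Q x\<bar> \<le> (\<Sum>i\<le>degree Q. \<bar>coeff Q i\<bar>) * x ^ degree Q"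
proof -
  have "\<bar>poly Q x\<bar> = \<bar>\<Sum>i\<le>degree Q. coeff Q i * x ^ i\<bar>" by (simp add: poly_altdef)
  also have "\<dots> \<le> (\<Sum>i\<le>degree Q. \<bar>coeff Q i * x ^ i\<bar>)" by (rule sum_abs)
  also have "\<dots> \<le> (\<Sum>i\<le>degree Q. \<bar>coeff Q i\<bar> * x ^ degree Q)"
  proof (rule sum_mono)
    fix i assume "i \<in> {..degree Q}"
    hence "x ^ i \<le> x ^ degree Q" using x by (intro power_increasing) auto
    moreover have "\<bar>x ^ i\<bar> = x ^ i" using x by simp
    ultimately show "\<bar>coeff Q i * x ^ i\<bar> \<le> \<bar>coeff Q i\<bar> * x ^ degree Q"
      by (simp add: abs_mult mult_left_mono)
  qed
  also have "\<dots> = (\<Sum>i\<le>degree Q. \<bar>coeff Q i\<bar>) * x ^ degree Q" by (simp add: sum_distrib_right)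
  finally show ?thesis .
qed

lemma prod_pf_le: "(m::nat) > 0 \<Longrightarrow> \<Prod>(prime_factors m) \<le> m"
proof -
  assume m: "m > 0"
  have "\<Prod>(prime_factors m) dvd (\<Prod>p\<in>prime_factors m. p ^ multiplicity p m)"
  proof (rule prod_dvd_prod)
    fix p assume "p \<in> prime_factors m"
    hence "multiplicity p m > 0" by (simp add: prime_factors_multiplicity)
    thus "p dvd p ^ multiplicity p m" by (simp add: dvd_power)
  qed
  also have "\<dots> = m" using m by (simp add: prod_prime_factors)
  finally show ?thesis using m by (simp add: dvd_imp_le)
qed

lemma x_bound:
  fixes x k :: nat and T :: "nat set"
  assumes "x \<in> F k" and "finite T" and "prime_factors x \<subseteq> T" and "\<forall>p\<in>T. p \<ge> 1"
  shows "x \<le> (\<Prod>T) ^ k"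
proof -
  have x0: "x > 0" and Kx: "K x < k" using assms(1) by (auto simp: F_def)
  have mk: "multiplicity p x \<le> k" if "p \<in> prime_factors x" for p
  proof -
    have ne: "prime_factors x \<noteq> {}" using that by auto
    have "multiplicity p x \<le> Max ((\<lambda>p. multiplicity p x) ` prime_factors x)"
      using that by (intro Max_ge) auto
    moreover have "K x = Max ((\<lambda>p. multiplicity p x) ` prime_factors x)"
      using ne unfolding K_def by (simp only: if_False)
    ultimately show ?thesis using Kx by linarith
  qed
  have "x = (\<Prod>p\<in>prime_factors x. p ^ multiplicity p x)" using x0 by (simp add: prod_prime_factors)
  also have "\<dots> \<le> (\<Prod>p\<in>prime_factors x. p ^ k)"
  proof (intro prod_mono conjI power_increasing mk)
    fix p assume "p \<in> prime_factors x"
    hence "prime p" by auto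
    thus "1 \<le> p" using prime_gt_0_nat[of p] by linarith
  qed auto
  also have "\<dots> \<le> (\<Prod>p\<in>T. p ^ k)"
  proof -
    have "(\<Prod>p\<in>T. p ^ k) = (\<Prod>p\<in>T - prime_factors x. p ^ k) * (\<Prod>p\<in>prime_factors x. p ^ k)"
      by (rule prod.subset_diff[OF assms(3,2)])
    moreover have "(\<Prod>p\<in>T - prime_factors x. p ^ k) \<ge> 1"
      using assms(4) by (intro prod_ge_1) auto
    ultimately show ?thesis by simp
  qed
  also have "\<dots> = (\<Prod>T) ^ k" by (simp add: prod_power_distrib)
  finally show ?thesis .
qed

lemma prod_union_le:
  fixes S T :: "nat set" assumes "finite S" "finite T" "\<forall>p\<in>S \<union> T. p \<ge> 1"
  shows "\<Prod>(S \<union> T) \<le> \<Prod>S * \<Prod>T"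
proof -
  have "\<Prod>(S \<union> T) * \<Prod>(S \<inter> T) = \<Prod>S * \<Prod>T" using assms by (intro prod.union_inter) auto
  moreover have "\<Prod>(S \<inter> T) \<ge> 1" using assms by (intro prod_ge_1) auto
  ultimately show ?thesis by (metis le_square mult_le_mono2 nat_mult_1_right order_trans)
qed

lemma key:
  fixes k r s e :: nat and a :: int and A :: "nat \<Rightarrow> nat" and P Q :: "int poly"
    and n :: "nat list" and x D :: nat
  assumes Apos: "\<forall>i\<in>{1..r}. A i > 0" and sr: "s \<le> r" and e1: "e \<ge> 1"
    and PQ: "P = [:-a,1:]^e * Q"
    and xF: "x \<in> F k"
    and eq: "poly P (int x + a) = int D"
    and Ddef: "D = (\<Prod>i\<in>{1..s}. A i ^ (n!(i-1)) * fact (n!(i-1))) * (\<Prod>i\<in>{s+1..r}. A i ^ (n!(i-1)) * dfact (n!(i-1)))"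
  defines "P' \<equiv> P \<circ>\<^sub>p [:a,1:]"
  defines "C1 \<equiv> nat (\<Sum>i\<le>degree P'. \<bar>coeff P' i\<bar>)"
  defines "L \<equiv> k * degree P'"
  defines "E \<equiv> 2 * 4 ^ L"
  defines "H \<equiv> E ^ (E*E+2)"
  defines "AA \<equiv> \<Prod>i\<in>{1..r}. A i"
  shows "(\<Sum>i\<in>{1..r}. n!(i-1)) < H^r * C1 * AA^L"
proof -
  define N where "N = (\<Sum>i\<in>{1..r}. n!(i-1))"
  define D1 where "D1 = (\<Prod>i\<in>{1..s}. A i ^ (n!(i-1)) * fact (n!(i-1)))"
  define D2 where "D2 = (\<Prod>i\<in>{s+1..r}. A i ^ (n!(i-1)) * dfact (n!(i-1)))"
  have D12: "D = D1 * D2" using Ddef D1_def D2_def by simp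
  have D1pos: "D1 > 0" unfolding D1_def
    by (intro prod_pos) (use Apos sr in auto)
  have D2pos: "D2 > 0" unfolding D2_def
    by (intro prod_pos) (use Apos sr dfact_pos in auto)
  have Dpos: "D > 0" using D12 D1pos D2pos by simp
  have AApos: "AA > 0" unfolding AA_def by (intro prod_pos) (use Apos in auto)
  have xpos: "x > 0" using xF by (simp add: F_def)
  have "poly P (int x + a) = int x ^ e * poly Q (int x + a)"
    unfolding PQ by (simp add: poly_power)
  moreover have "int x dvd int x ^ e" using e1 by (intro dvd_power) auto
  ultimately have "int x dvd int D" using eq by (metis dvd_mult2)
  hence xD: "x dvd D" by simp
  define T where "T = prime_factors AA \<union> {p. prime p \<and> p \<le> N}"
  have finT: "finite T" unfolding T_def by auto
  have T1: "\<forall>p\<in>T. p \<ge> 1"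
  proof
    fix p assume "p \<in> T"
    hence "prime p" unfolding T_def by (auto simp: in_prime_factors_iff)
    thus "p \<ge> 1" using prime_gt_0_nat[of p] by linarith
  qed
  have le_N: "n!(i-1) \<le> N" if "i \<in> {1..r}" for i
    unfolding N_def using that by (intro member_le_sum) auto
  have pfT: "prime_factors x \<subseteq> T"
  proof
    fix p assume pp: "p \<in> prime_factors x"
    hence pr: "prime p" and "p dvd x" by auto
    hence pD: "p dvd D1 * D2" using xD D12 by (metis dvd_trans)
    have "(\<exists>i\<in>{1..r}. p dvd A i) \<or> p \<le> N"
    proof (cases "p dvd D1")
      case True
      then obtain i where i: "i \<in> {1..s}" "p dvd A i ^ (n!(i-1)) * fact (n!(i-1))"
        unfolding D1_def using pr by (auto simp: prime_dvd_prod_iff)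
      hence "p dvd A i ^ (n!(i-1)) \<or> p dvd fact (n!(i-1))" using pr by (simp add: prime_dvd_mult_iff)
      hence "p dvd A i \<or> p \<le> n!(i-1)" using pr by (metis prime_dvd_power prime_dvd_fact_iff)
      moreover have "i \<in> {1..r}" using i sr by auto
      ultimately show ?thesis using le_N by (meson order_trans)
    next
      case False
      hence "p dvd D2" using pD pr by (simp add: prime_dvd_mult_iff)
      then obtain i where i: "i \<in> {s+1..r}" "p dvd A i ^ (n!(i-1)) * dfact (n!(i-1))"
        unfolding D2_def using pr by (auto simp: prime_dvd_prod_iff)
      hence "p dvd A i ^ (n!(i-1)) \<or> p dvd dfact (n!(i-1))" using pr by (simp add: prime_dvd_mult_iff)
      hence "p dvd A i \<or> p \<le> n!(i-1)" using pr by (metis prime_dvd_power prime_dvd_dfact)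
      moreover have "i \<in> {1..r}" using i sr by auto
      ultimately show ?thesis using le_N by (meson order_trans)
    qed
    thus "p \<in> T"
    proof
      assume "\<exists>i\<in>{1..r}. p dvd A i"
      then obtain i where "i \<in> {1..r}" "p dvd A i" by blast
      hence "p dvd AA" unfolding AA_def by (meson dvd_prodI dvd_trans finite_atLeastAtMost)
      thus "p \<in> T" using pr AApos unfolding T_def by (auto simp: in_prime_factors_iff)
    next
      assume "p \<le> N" thus "p \<in> T" using pr unfolding T_def by auto
    qed
  qed
  have "\<Prod>T \<le> \<Prod>(prime_factors AA) * \<Prod>{p. prime p \<and> p \<le> N}"
    unfolding T_def by (rule prod_union_le) (use T1 in \<open>auto simp: T_def\<close>)
  also have "\<dots> \<le> AA * 4 ^ N"
    using prod_pf_le[OF AApos] prim_le[of N] unfolding prim_def by (intro mult_le_mono) auto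
  finally have TB: "\<Prod>T \<le> AA * 4 ^ N" .
  have xB: "x \<le> (AA * 4 ^ N) ^ k"
    using x_bound[OF xF finT pfT T1] TB by (meson order_trans power_mono zero_le)
  define S where "S = (\<Sum>i\<le>degree P'. \<bar>coeff P' i\<bar>)"
  have S0: "S \<ge> 0" unfolding S_def by (intro sum_nonneg) auto
  have "int D = poly P' (int x)" unfolding P'_def using eq by (simp add: poly_pcompose add.commute)
  also have "\<dots> \<le> \<bar>poly P' (int x)\<bar>" by simp
  also have "\<dots> \<le> S * int x ^ degree P'" unfolding S_def using xpos by (intro poly_abs_bound) auto
  also have "\<dots> = int (C1 * x ^ degree P')" unfolding C1_def S_def[symmetric] using S0 by simp
  finally have DC: "D \<le> C1 * x ^ degree P'" by linarith
  also have "\<dots> \<le> C1 * ((AA * 4 ^ N) ^ k) ^ degree P'" by (intro mult_le_mono2 power_mono xB) simp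
  also have "\<dots> = C1 * AA ^ L * 4 ^ (N * L)" unfolding L_def
    by (simp add: power_mult power_mult_distrib mult.commute mult.left_commute)
  finally have Dup: "D \<le> C1 * AA ^ L * 4 ^ (N * L)" .
  have "(\<Prod>i\<in>{1..r}. dfact (n!(i-1))) = (\<Prod>i\<in>{1..s}. dfact (n!(i-1))) * (\<Prod>i\<in>{s+1..r}. dfact (n!(i-1)))"
  proof -
    have "{1..r} = {1..s} \<union> {s+1..r}" using sr by auto
    thus ?thesis by (simp add: prod.union_disjoint)
  qed
  also have "\<dots> \<le> D1 * D2" unfolding D1_def D2_def
  proof (intro mult_le_mono prod_mono conjI)
    fix i assume i: "i \<in> {1..s}"
    have "A i > 0" using i sr Apos by auto
    hence "1 \<le> A i ^ (n!(i-1))" by simp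
    thus "dfact (n!(i-1)) \<le> A i ^ (n!(i-1)) * fact (n!(i-1))"
      using dfact_le_fact[of "n!(i-1)"] by (metis mult_le_mono mult_1)
  next
    fix i assume i: "i \<in> {s+1..r}"
    have "A i > 0" using i sr Apos by auto
    hence "1 \<le> A i ^ (n!(i-1))" by simp
    thus "dfact (n!(i-1)) \<le> A i ^ (n!(i-1)) * dfact (n!(i-1))"
      by (metis mult_le_mono1 mult_1)
  qed auto
  finally have Dlow: "(\<Prod>i\<in>{1..r}. dfact (n!(i-1))) \<le> D" using D12 by simp
  have E1: "E \<ge> 1" unfolding E_def by simp
  have "E ^ N = (\<Prod>i\<in>{1..r}. E ^ (n!(i-1)))" unfolding N_def by (rule power_sum)
  also have "\<dots> \<le> (\<Prod>i\<in>{1..r}. H * dfact (n!(i-1)))"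
    unfolding H_def by (intro prod_mono conjI dfact_growth E1) auto
  also have "\<dots> = H ^ r * (\<Prod>i\<in>{1..r}. dfact (n!(i-1)))" by (simp add: prod.distrib)
  also have "\<dots> \<le> H ^ r * D" using Dlow by simp
  also have "\<dots> \<le> H ^ r * (C1 * AA ^ L * 4 ^ (N * L))" using Dup by simp
  finally have "2 ^ N * 4 ^ (N * L) \<le> (H ^ r * C1 * AA ^ L) * 4 ^ (N * L)"
    unfolding E_def by (simp add: power_mult_distrib power_mult[symmetric] mult.commute mult.left_commute)
  hence "2 ^ N \<le> H ^ r * C1 * AA ^ L" by simp
  moreover have "N < 2 ^ N" by (rule less_exp)
  ultimately show ?thesis unfolding N_def by linarith
qed

theorem theorem4:
  fixes k r s e t :: nat and a :: int and A :: "nat \<Rightarrow> nat"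
    and P :: "int poly" and Ps :: "nat \<Rightarrow> int poly" and es :: "nat \<Rightarrow> nat"
  assumes "k \<ge> 2" and "s \<le> r" and "r \<ge> 1"
    and "\<forall>i\<in>{1..r}. A i > 0"
    and "e \<ge> 1" and "\<forall>j\<in>{1..t}. es j \<ge> 1"
    and "\<forall>j\<in>{1..t}. irreducible (Ps j)" and "inj_on Ps {1..t}"
    and "P = [:-a, 1:] ^ e * (\<Prod>j\<in>{1..t}. Ps j ^ es j)"
  shows "finite {(n, y). length n = r \<and> (\<forall>i<r. n ! i > 0)
            \<and> (\<exists>x\<in>F k. y = int x + a)
            \<and> poly P y = int ((\<Prod>i\<in>{1..s}. A i ^ (n ! (i - 1)) * fact (n ! (i - 1)))
                            * (\<Prod>i\<in>{s+1..r}. A i ^ (n ! (i - 1)) * dfact (n ! (i - 1))))}"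
proof -
  define Q where "Q = (\<Prod>j\<in>{1..t}. Ps j ^ es j)"
  have PQ: "P = [:-a, 1:] ^ e * Q" using assms(9) Q_def by simp
  have Q0: "Q \<noteq> 0" unfolding Q_def
  proof
    assume "(\<Prod>j\<in>{1..t}. Ps j ^ es j) = 0"
    then obtain j where "j \<in> {1..t}" "Ps j ^ es j = 0" by (auto simp: prod_zero_iff)
    hence "Ps j = 0" by simp
    moreover have "irreducible (Ps j)" using assms(7) \<open>j \<in> {1..t}\<close> by blast
    ultimately show False by simp
  qed
  have lin0: "[:-a, 1:] ^ e \<noteq> (0 :: int poly)" by simp
  have degP: "degree P \<ge> 1"
    using degree_mult_eq[OF lin0 Q0] degree_linear_power[of "-a" e] assms(5) PQ by simp
  define Dv where "Dv n = (\<Prod>i\<in>{1..s}. A i ^ (n ! (i - 1)) * fact (n ! (i - 1)))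
                            * (\<Prod>i\<in>{s+1..r}. A i ^ (n ! (i - 1)) * dfact (n ! (i - 1)))" for n :: "nat list"
  define P' where "P' = P \<circ>\<^sub>p [:a,1:]"
  define B where "B = ((2 * 4 ^ (k * degree P')) ^ ((2 * 4 ^ (k * degree P')) * (2 * 4 ^ (k * degree P')) + 2)) ^ r
      * nat (\<Sum>i\<le>degree P'. \<bar>coeff P' i\<bar>) * (\<Prod>i\<in>{1..r}. A i) ^ (k * degree P')"
  define Ns where "Ns = {n. set n \<subseteq> {..<B} \<and> length n = r}"
  have sub: "{(n, y). length n = r \<and> (\<forall>i<r. n ! i > 0)
            \<and> (\<exists>x\<in>F k. y = int x + a)
            \<and> poly P y = int ((\<Prod>i\<in>{1..s}. A i ^ (n ! (i - 1)) * fact (n ! (i - 1)))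
                            * (\<Prod>i\<in>{s+1..r}. A i ^ (n ! (i - 1)) * dfact (n ! (i - 1))))}
        \<subseteq> (\<Union>n\<in>Ns. {n} \<times> {y. poly P y = int (Dv n)})"
  proof
    fix z assume "z \<in> {(n, y). length n = r \<and> (\<forall>i<r. n ! i > 0)
            \<and> (\<exists>x\<in>F k. y = int x + a)
            \<and> poly P y = int ((\<Prod>i\<in>{1..s}. A i ^ (n ! (i - 1)) * fact (n ! (i - 1)))
                            * (\<Prod>i\<in>{s+1..r}. A i ^ (n ! (i - 1)) * dfact (n ! (i - 1))))}"
    then obtain n y x where z: "z = (n, y)" and len: "length n = r" and xF: "x \<in> F k"
      and yx: "y = int x + a" and eq0: "poly P y = int (Dv n)"
      unfolding Dv_def by blast
    have eq: "poly P (int x + a) = int (Dv n)" using eq0 yx by simp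
    have "(\<Sum>i\<in>{1..r}. n!(i-1)) < B"
      unfolding B_def P'_def
      by (rule key[OF assms(4) assms(2) assms(5) PQ xF eq]) (simp add: Dv_def)
    moreover have "n!i \<le> (\<Sum>i\<in>{1..r}. n!(i-1))" if "i < r" for i
    proof -
      have "n!i = n!((i+1)-1)" by simp
      also have "\<dots> \<le> (\<Sum>i\<in>{1..r}. n!(i-1))" using that by (intro member_le_sum) auto
      finally show ?thesis .
    qed
    ultimately have "set n \<subseteq> {..<B}" using len
      by (auto simp: in_set_conv_nth) (meson le_less_trans)
    hence "n \<in> Ns" using len unfolding Ns_def by simp
    thus "z \<in> (\<Union>n\<in>Ns. {n} \<times> {y. poly P y = int (Dv n)})" using z eq0 by blast
  qed
  have finNs: "finite Ns" unfolding Ns_def by (rule finite_lists_length_eq) simp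
  have finY: "finite {y. poly P y = c}" for c :: int
  proof -
    have ne: "P - [:c:] \<noteq> 0"
    proof
      assume "P - [:c:] = 0"
      hence "P = [:c:]" by simp
      thus False using degP by simp
    qed
    have "{y. poly P y = c} = {y. poly (P - [:c:]) y = 0}" by simp
    thus ?thesis using poly_roots_finite[OF ne] by simp
  qed
  show ?thesis
    by (rule finite_subset[OF sub]) (use finNs finY in blast)
qed

end
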